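(* Let $\mathcal{S}$ be a finite set of road segments and $y_1,\dots,y_N$ (collectively $y_{[N]}$) the routes of $N$ historical trips, each a nonempty set of distinct segments. For each $n$ and $s\in y_n$ one observes $T'_{n,s}=\theta_s+\varepsilon_{n,s}$, where the $\theta_s$ are i.i.d. with mean $\mu$ and variance $\tau^2$, independent of the errors; for each $n$ the errors $(\varepsilon_{n,s})_{s\in y_n}$ have mean $0$ and covariances $\sigma_{s,t}$; errors from different trips are independent. Fix a route $y\subseteq\mathcal{S}$. (1) Let $\mathscr{S}_y$ be a partition of $y$ into nonempty disjoint sets (super-segments), and for a set $S$ of segments let $N_S=|\{n: S\subseteq y_n\}|$. For functions $\phi_S:\mathbb{Z}_{\ge0}\to\mathbb{R}$ with $\phi_S(0)=0$, consider the generalized segment-based estimator $$\hat\Theta^{(\mathrm{g\text{-}seg})}_y=\sum_{S\in\mathscr{S}_y}\Big[(1-\phi_S(N_S))|S|\mu+\phi_S(N_S)\frac{\sum_{n:S\subseteq y_n}\sum_{s\in S}T'_{n,s}}{N_S}\Big].$$ Its integrated risk is $$R\big(\hat\Theta^{(\mathrm{g\text{-}seg})}_y\mid y_{[N]}\big)=\sum_{S,T\in\mathscr{S}_y}\frac{N_{S\cup T}}{N_SN_T}\phi_S(N_S)\phi_T(N_T)\Big(\sum_{s\in S,t\in T}\sigma_{s,t}\Big)+\sum_{S\in\mathscr{S}_y}(1-\phi_S(N_S))^2|S|\tau^2.$$ (2) Let $\delta(y)$ be a set of historical routes (the neighborhood of $y$), $M_{\delta(y)}=\sum_{n=1}^N\mathbf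 1\{y_n\in\delta(y)\}$, $N^{\delta(y)}_s=|\{n: y_n\in\delta(y), s\in y_n\}|$, $N^{\delta(y)}_{s\cup t}=|\{n: y_n\in\delta(y), s,t\in y_n\}|$, $\mathcal{S}_{\delta(y)}=\bigcup_{y'\in\delta(y)}y'$, and $\bar y_{\delta(y)}=\sum_{n:y_n\in\delta(y)}|y_n|/M_{\delta(y)}$. For a function $\phi_{\delta(y)}:\mathbb{Z}_{\ge0}\to\mathbb{R}$ with $\phi_{\delta(y)}(0)=0$, consider the route-based estimator $$\hat\Theta^{(\mathrm{route})}_y=(1-\phi_{\delta(y)}(M_{\delta(y)}))|y|\mu+\phi_{\delta(y)}(M_{\delta(y)})\frac{\sum_{n:y_n\in\delta(y)}\sum_{s\in y_n}T'_{n,s}}{M_{\delta(y)}}.$$ Writing $\phi=\phi_{\delta(y)}(M_{\delta(y)})$ and $M=M_{\delta(y)}$, its integrated risk is $$R\big(\hat\Theta^{(\mathrm{route})}_y\mid y_{[N]}\big)=\Big(\frac{\phi}{M}\Big)^2\Big(\sum_{s,t\in\mathcal{S}_{\delta(y)}}N^{\delta(y)}_{s\cup t}\sigma_{s,t}\Big)+\big(\phi(\bar y_{\delta(y)}-|y|)\mu\big)^2+\sum_{s\in\mathcal{S}_{\delta(y)}\setminus y}\Big(\phi\frac{N^{\delta(y)}_s}{M}\Big)^2\tau^2+\sum_{s\in y}\Big(1-\phi\frac{N^{\delta(y)}_s}{M}\Big)^2\tau^2.$$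
   Context: Convention $0/0=0$. For a route $y$, the integrated risk of an estimator $\hat\Theta_y$ is $R(\hat\Theta_y\mid y_{[N]})=\mathbb{E}[(\hat\Theta_y-\sum_{s\in y}\theta_s)^2\mid y_{[N]}]$, the expectation taken over the errors and the prior distribution of $\theta$, conditional on the historical routes. For $s=t$, $N_{s\cup s}=N_s$ and $N^{\delta(y)}_{s\cup s}=N^{\delta(y)}_s$. No distributional assumption beyond means and covariances is imposed. *)

theory Defs
  imports "HOL-Probability.Probability" "HOL-Library.Disjoint_Sets"
begin

(* Historical trips are indexed by n \<in> {1..N}; Y n is the route of trip n. *)

definition Ncnt :: "(nat \<Rightarrow> 's set) \<Rightarrow> nat \<Rightarrow> 's set \<Rightarrow> nat" where
  "Ncnt Y N S = card {n \<in> {1..N}. S \<subseteq> Y n}"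

definition Mnb :: "(nat \<Rightarrow> 's set) \<Rightarrow> nat \<Rightarrow> 's set set \<Rightarrow> nat" where
  "Mnb Y N D = card {n \<in> {1..N}. Y n \<in> D}"

definition Nnb1 :: "(nat \<Rightarrow> 's set) \<Rightarrow> nat \<Rightarrow> 's set set \<Rightarrow> 's \<Rightarrow> nat" where
  "Nnb1 Y N D s = card {n \<in> {1..N}. Y n \<in> D \<and> s \<in> Y n}"

definition Nnb2 :: "(nat \<Rightarrow> 's set) \<Rightarrow> nat \<Rightarrow> 's set set \<Rightarrow> 's \<Rightarrow> 's \<Rightarrow> nat" where
  "Nnb2 Y N D s t = card {n \<in> {1..N}. Y n \<in> D \<and> s \<in> Y n \<and> t \<in> Y n}"

(* bar y_{delta(y)} (with 0/0 = 0, as real division in HOL) *)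
definition ybar :: "(nat \<Rightarrow> 's set) \<Rightarrow> nat \<Rightarrow> 's set set \<Rightarrow> real" where
  "ybar Y N D = (\<Sum>n\<in>{n \<in> {1..N}. Y n \<in> D}. real (card (Y n))) / real (Mnb Y N D)"

definition Tobs :: "('s \<Rightarrow> 'a \<Rightarrow> real) \<Rightarrow> (nat \<Rightarrow> 's \<Rightarrow> 'a \<Rightarrow> real) \<Rightarrow> nat \<Rightarrow> 's \<Rightarrow> 'a \<Rightarrow> real" where
  "Tobs \<theta> \<epsilon> n s \<omega> = \<theta> s \<omega> + \<epsilon> n s \<omega>"

definition gseg_est ::
  "(nat \<Rightarrow> 's set) \<Rightarrow> nat \<Rightarrow> ('s \<Rightarrow> 'a \<Rightarrow> real) \<Rightarrow> (nat \<Rightarrow> 's \<Rightarrow> 'a \<Rightarrow> real) \<Rightarrow> real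
    \<Rightarrow> 's set set \<Rightarrow> ('s set \<Rightarrow> nat \<Rightarrow> real) \<Rightarrow> 'a \<Rightarrow> real" where
  "gseg_est Y N \<theta> \<epsilon> \<mu> P \<phi> \<omega> =
     (\<Sum>S\<in>P. (1 - \<phi> S (Ncnt Y N S)) * real (card S) * \<mu>
        + \<phi> S (Ncnt Y N S) *
          ((\<Sum>n\<in>{n \<in> {1..N}. S \<subseteq> Y n}. \<Sum>s\<in>S. Tobs \<theta> \<epsilon> n s \<omega>) / real (Ncnt Y N S)))"

definition route_est ::
  "(nat \<Rightarrow> 's set) \<Rightarrow> nat \<Rightarrow> ('s \<Rightarrow> 'a \<Rightarrow> real) \<Rightarrow> (nat \<Rightarrow> 's \<Rightarrow> 'a \<Rightarrow> real) \<Rightarrow> real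
    \<Rightarrow> 's set \<Rightarrow> 's set set \<Rightarrow> (nat \<Rightarrow> real) \<Rightarrow> 'a \<Rightarrow> real" where
  "route_est Y N \<theta> \<epsilon> \<mu> y D \<phi> \<omega> =
     (1 - \<phi> (Mnb Y N D)) * real (card y) * \<mu>
     + \<phi> (Mnb Y N D) *
       ((\<Sum>n\<in>{n \<in> {1..N}. Y n \<in> D}. \<Sum>s\<in>Y n. Tobs \<theta> \<epsilon> n s \<omega>) / real (Mnb Y N D))"

(* integrated risk E[(est - sum_{s in y} theta_s)^2] (routes are fixed, i.e. conditioned on) *)
definition risk :: "'a measure \<Rightarrow> ('s \<Rightarrow> 'a \<Rightarrow> real) \<Rightarrow> 's set \<Rightarrow> ('a \<Rightarrow> real) \<Rightarrow> real" where
  "risk M \<theta> y est = integral\<^sup>L M (\<lambda>\<omega>. (est \<omega> - (\<Sum>s\<in>y. \<theta> s \<omega>))\<^sup>2)"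

end

theory Submission
  imports Defs
begin


definition sqi :: "'a measure \<Rightarrow> ('a \<Rightarrow> real) \<Rightarrow> bool" where
  "sqi M f \<longleftrightarrow> f \<in> borel_measurable M \<and> integrable M (\<lambda>x. (f x)\<^sup>2)"

lemma abs_mult_le_sq: "\<bar>a * b\<bar> \<le> \<bar>a\<^sup>2 + (b::real)\<^sup>2\<bar>"
proof -
  have a2: "0 \<le> a\<^sup>2" and b2: "0 \<le> b\<^sup>2" by simp_all
  have "\<bar>a\<bar> * \<bar>b\<bar> \<le> a\<^sup>2 + b\<^sup>2"
  proof (cases "\<bar>a\<bar> \<le> \<bar>b\<bar>")
    case True
    then have "\<bar>a\<bar> * \<bar>b\<bar> \<le> \<bar>b\<bar> * \<bar>b\<bar>" by (rule mult_right_mono) simp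
    also have "\<bar>b\<bar> * \<bar>b\<bar> = b\<^sup>2" by (simp add: power2_eq_square abs_mult_self_eq)
    finally show ?thesis using a2 by linarith
  next
    case False
    then have "\<bar>b\<bar> * \<bar>a\<bar> \<le> \<bar>a\<bar> * \<bar>a\<bar>" by (intro mult_right_mono) simp_all
    also have "\<bar>a\<bar> * \<bar>a\<bar> = a\<^sup>2" by (simp add: power2_eq_square abs_mult_self_eq)
    finally have "\<bar>a\<bar> * \<bar>b\<bar> \<le> a\<^sup>2" by (simp add: mult.commute)
    then show ?thesis using b2 by linarith
  qed
  moreover have "\<bar>a\<^sup>2 + b\<^sup>2\<bar> = a\<^sup>2 + b\<^sup>2" using a2 b2 by simp
  ultimately show ?thesis by (simp add: abs_mult)
qed

lemma sqi_mult: "sqi M f \<Longrightarrow> sqi M g \<Longrightarrow> integrable M (\<lambda>x. f x * g x)"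
proof -
  assume f: "sqi M f" and g: "sqi M g"
  have m: "(\<lambda>x. f x * g x) \<in> borel_measurable M" using f g by (auto simp: sqi_def intro!: borel_measurable_times)
  have i: "integrable M (\<lambda>x. (f x)\<^sup>2 + (g x)\<^sup>2)" using f g by (auto simp: sqi_def)
  have "AE x in M. norm (f x * g x) \<le> norm ((f x)\<^sup>2 + (g x)\<^sup>2)"
    by (rule AE_I2) (simp only: real_norm_def abs_mult_le_sq)
  then show ?thesis by (rule Bochner_Integration.integrable_bound[OF i m])
qed

lemma sqi_add: "sqi M f \<Longrightarrow> sqi M g \<Longrightarrow> sqi M (\<lambda>x. f x + g x)"
proof -
  assume a: "sqi M f" "sqi M g"
  have "integrable M (\<lambda>x. (f x)\<^sup>2 + 2 * (f x * g x) + (g x)\<^sup>2)"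
    using a sqi_mult[OF a] unfolding sqi_def by auto
  moreover have "(\<lambda>x. (f x)\<^sup>2 + 2 * (f x * g x) + (g x)\<^sup>2) = (\<lambda>x. (f x + g x)\<^sup>2)"
    by (simp add: power2_sum algebra_simps)
  ultimately show ?thesis using a unfolding sqi_def by auto
qed

lemma sqi_cmult: "sqi M f \<Longrightarrow> sqi M (\<lambda>x. c * f x)"
  unfolding sqi_def by (auto simp: power_mult_distrib)

lemma sqi_const: "finite_measure M \<Longrightarrow> sqi M (\<lambda>x. c)"
  unfolding sqi_def by (auto simp: finite_measure.integrable_const)

lemma sqi_sum: "finite_measure M \<Longrightarrow> (\<And>i. i \<in> I \<Longrightarrow> sqi M (f i)) \<Longrightarrow> sqi M (\<lambda>x. \<Sum>i\<in>I. f i x)"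
proof (induction I rule: infinite_finite_induct)
  case (infinite A)
  then show ?case using sqi_const[of M 0] by simp
next
  case empty
  then show ?case using sqi_const[of M 0] by simp
next
  case (insert x F)
  then show ?case by (simp add: sqi_add)
qed

lemma sqi_int:
  assumes "finite_measure M" "sqi M f" shows "integrable M f"
proof -
  have "f \<in> borel_measurable M" "integrable M (\<lambda>x. (f x)\<^sup>2)" using assms(2) by (auto simp: sqi_def)
  then show ?thesis by (rule finite_measure.square_integrable_imp_integrable[OF assms(1)])
qed

lemma E_prod_sums:
  assumes "finite I" "finite J" "\<And>i. i \<in> I \<Longrightarrow> sqi M (f i)" "\<And>j. j \<in> J \<Longrightarrow> sqi M (g j)"
  shows "integral\<^sup>L M (\<lambda>x. (\<Sum>i\<in>I. f i x) * (\<Sum>j\<in>J. g j x))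
       = (\<Sum>i\<in>I. \<Sum>j\<in>J. integral\<^sup>L M (\<lambda>x. f i x * g j x))"
proof -
  have "integral\<^sup>L M (\<lambda>x. (\<Sum>i\<in>I. f i x) * (\<Sum>j\<in>J. g j x))
      = integral\<^sup>L M (\<lambda>x. \<Sum>i\<in>I. \<Sum>j\<in>J. f i x * g j x)"
    by (simp add: sum_product)
  also have "\<dots> = (\<Sum>i\<in>I. integral\<^sup>L M (\<lambda>x. \<Sum>j\<in>J. f i x * g j x))"
    by (rule Bochner_Integration.integral_sum[where f="\<lambda>i x. \<Sum>j\<in>J. f i x * g j x"]) (auto intro!: sqi_mult assms)
  also have "\<dots> = (\<Sum>i\<in>I. \<Sum>j\<in>J. integral\<^sup>L M (\<lambda>x. f i x * g j x))"
    by (intro sum.cong refl Bochner_Integration.integral_sum) (auto intro!: sqi_mult assms)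
  finally show ?thesis .
qed

lemma bilin:
  assumes "sqi M U" "sqi M V" "sqi M W" "sqi M X"
  shows "integral\<^sup>L M (\<lambda>x. (a * U x + b * V x) * (c * W x + e * X x))
    = a * c * integral\<^sup>L M (\<lambda>x. U x * W x) + a * e * integral\<^sup>L M (\<lambda>x. U x * X x)
    + b * c * integral\<^sup>L M (\<lambda>x. V x * W x) + b * e * integral\<^sup>L M (\<lambda>x. V x * X x)"
proof -
  have i: "integrable M (\<lambda>x. U x * W x)" "integrable M (\<lambda>x. U x * X x)"
     "integrable M (\<lambda>x. V x * W x)" "integrable M (\<lambda>x. V x * X x)"
    using assms by (auto intro!: sqi_mult)
  have "(\<lambda>x. (a * U x + b * V x) * (c * W x + e * X x)) =
    (\<lambda>x. (a * c) * (U x * W x) + (a * e) * (U x * X x) + (b * c) * (V x * W x) + (b * e) * (V x * X x))"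
    by (auto simp: algebra_simps)
  then show ?thesis using i by simp
qed

lemma centered_sq:
  assumes "prob_space M" "sqi M X" "sqi M Z" "integral\<^sup>L M X = 0" "integral\<^sup>L M Z = 0"
    "integral\<^sup>L M (\<lambda>x. X x * Z x) = 0"
  shows "integral\<^sup>L M (\<lambda>x. (c + X x + Z x)\<^sup>2) = c\<^sup>2 + integral\<^sup>L M (\<lambda>x. (X x)\<^sup>2) + integral\<^sup>L M (\<lambda>x. (Z x)\<^sup>2)"
proof -
  interpret prob_space M by fact
  have fm: "finite_measure M" by (rule finite_measure_axioms)
  have i: "integrable M X" "integrable M Z" "integrable M (\<lambda>x. X x * Z x)"
     "integrable M (\<lambda>x. (X x)\<^sup>2)" "integrable M (\<lambda>x. (Z x)\<^sup>2)"
    using sqi_int[OF fm assms(2)] sqi_int[OF fm assms(3)] sqi_mult[OF assms(2) assms(3)]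
      assms(2,3) unfolding sqi_def by simp_all
  have eq: "(\<lambda>x. (c + X x + Z x)\<^sup>2) = (\<lambda>x. c\<^sup>2 + (2*c) * X x + (2*c) * Z x + (X x)\<^sup>2 + (Z x)\<^sup>2 + 2 * (X x * Z x))"
    by (auto simp: power2_eq_square algebra_simps)
  have fin: "emeasure M (space M) \<noteq> \<infinity>" using emeasure_space_1 by simp
  show ?thesis unfolding eq using i assms fin by (simp add: prob_space)
qed

lemma (in prob_space) indep_pair:
  assumes "indep_vars M' X I" "i \<in> I" "j \<in> I" "i \<noteq> j"
    "g \<in> measurable (M' i) borel" "h \<in> measurable (M' j) borel"
  shows "indep_var borel (\<lambda>\<omega>. g (X i \<omega>)) borel (\<lambda>\<omega>. h (X j \<omega>))"
proof -
  have "indep_var (PiM {i} M') (\<lambda>\<omega>. restrict (\<lambda>k. X k \<omega>) {i}) (PiM {j} M') (\<lambda>\<omega>. restrict (\<lambda>k. X k \<omega>) {j})"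
    by (rule indep_var_restrict[OF assms(1)]) (use assms in auto)
  note iv = this
  have m1: "(\<lambda>f. g (f i)) \<in> measurable (PiM {i} M') borel"
    using measurable_compose[OF measurable_component_singleton[of i "{i}" M'] assms(5)] by simp
  have m2: "(\<lambda>f. h (f j)) \<in> measurable (PiM {j} M') borel"
    using measurable_compose[OF measurable_component_singleton[of j "{j}" M'] assms(6)] by simp
  show ?thesis using indep_var_compose[OF iv m1 m2] by (simp add: comp_def)
qed

lemma swap_count:
  assumes "finite V" "finite B" "\<And>n. n \<in> B \<Longrightarrow> F n \<subseteq> V"
  shows "(\<Sum>n\<in>B. \<Sum>x\<in>F n. g x) = (\<Sum>x\<in>V. real (card {n\<in>B. x \<in> F n}) * g x)"
proof -
  have "(\<Sum>n\<in>B. \<Sum>x\<in>F n. g x) = (\<Sum>n\<in>B. \<Sum>x\<in>{x\<in>V. x \<in> F n}. g x)"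
    by (intro sum.cong refl) (use assms in auto)
  also have "\<dots> = (\<Sum>x\<in>V. \<Sum>n\<in>{n\<in>B. x \<in> F n}. g x)"
    by (rule sum.swap_restrict) (use assms in auto)
  also have "\<dots> = (\<Sum>x\<in>V. real (card {n\<in>B. x \<in> F n}) * g x)"
    by simp
  finally show ?thesis .
qed

lemma sum_Sigma_fst_snd:
  assumes "finite A" "\<And>x. x \<in> A \<Longrightarrow> finite (B x)"
  shows "(\<Sum>p\<in>Sigma A B. h (fst p) (snd p)) = (\<Sum>x\<in>A. \<Sum>y\<in>B x. (h x y :: real))"
  using assms by (simp add: sum.Sigma split_def)

lemma scal_int: "integral\<^sup>L M (\<lambda>x. (a * U x) * (b * W x)) = a * b * integral\<^sup>L M (\<lambda>x. U x * (W x :: real))"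
proof -
  have "(\<lambda>x. (a * U x) * (b * W x)) = (\<lambda>x. (a * b) * (U x * W x))" by (simp add: algebra_simps)
  then show ?thesis by simp
qed

theorem proposition2p3:
  fixes M :: "'a measure"
    and Seg :: "'s set" and N :: nat and Y :: "nat \<Rightarrow> 's set"
    and \<theta> :: "'s \<Rightarrow> 'a \<Rightarrow> real" and \<epsilon> :: "nat \<Rightarrow> 's \<Rightarrow> 'a \<Rightarrow> real"
    and \<mu> \<tau> :: real and \<sigma> :: "'s \<Rightarrow> 's \<Rightarrow> real"
    and y :: "'s set"
    and P :: "'s set set" and \<phi> :: "'s set \<Rightarrow> nat \<Rightarrow> real"
    and D :: "'s set set" and \<phi>D :: "nat \<Rightarrow> real"
  assumes prob: "prob_space M"
    and finSeg: "finite Seg"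
    and routes: "\<And>n. n \<in> {1..N} \<Longrightarrow> Y n \<noteq> {} \<and> Y n \<subseteq> Seg"
    (* theta: i.i.d. with mean mu and variance tau^2 *)
    and th_meas: "\<And>s. s \<in> Seg \<Longrightarrow> \<theta> s \<in> borel_measurable M"
    and th_int: "\<And>s. s \<in> Seg \<Longrightarrow> integrable M (\<theta> s)"
    and th_int2: "\<And>s. s \<in> Seg \<Longrightarrow> integrable M (\<lambda>\<omega>. (\<theta> s \<omega>)\<^sup>2)"
    and th_indep: "prob_space.indep_vars M (\<lambda>_. borel) \<theta> Seg"
    and th_ident: "\<And>s t. s \<in> Seg \<Longrightarrow> t \<in> Seg \<Longrightarrow> distr M borel (\<theta> s) = distr M borel (\<theta> t)"
    and th_mean: "\<And>s. s \<in> Seg \<Longrightarrow> integral\<^sup>L M (\<theta> s) = \<mu>"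
    and th_var: "\<And>s. s \<in> Seg \<Longrightarrow> integral\<^sup>L M (\<lambda>\<omega>. (\<theta> s \<omega> - \<mu>)\<^sup>2) = \<tau>\<^sup>2"
    (* errors: mean 0, covariances sigma within a trip *)
    and eps_meas: "\<And>n s. n \<in> {1..N} \<Longrightarrow> s \<in> Y n \<Longrightarrow> \<epsilon> n s \<in> borel_measurable M"
    and eps_int: "\<And>n s. n \<in> {1..N} \<Longrightarrow> s \<in> Y n \<Longrightarrow> integrable M (\<epsilon> n s)"
    and eps_int2: "\<And>n s. n \<in> {1..N} \<Longrightarrow> s \<in> Y n \<Longrightarrow> integrable M (\<lambda>\<omega>. (\<epsilon> n s \<omega>)\<^sup>2)"
    and eps_mean: "\<And>n s. n \<in> {1..N} \<Longrightarrow> s \<in> Y n \<Longrightarrow> integral\<^sup>L M (\<epsilon> n s) = 0"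
    and eps_cov: "\<And>n s t. n \<in> {1..N} \<Longrightarrow> s \<in> Y n \<Longrightarrow> t \<in> Y n \<Longrightarrow>
        integral\<^sup>L M (\<lambda>\<omega>. (\<epsilon> n s \<omega> - integral\<^sup>L M (\<epsilon> n s)) * (\<epsilon> n t \<omega> - integral\<^sup>L M (\<epsilon> n t))) = \<sigma> s t"
    (* theta independent of the errors; error vectors of different trips independent *)
    and indep: "prob_space.indep_vars M
        (\<lambda>i. case i of None \<Rightarrow> PiM Seg (\<lambda>_. borel) | Some n \<Rightarrow> PiM (Y n) (\<lambda>_. borel))
        (\<lambda>i \<omega>. case i of None \<Rightarrow> restrict (\<lambda>s. \<theta> s \<omega>) Seg | Some n \<Rightarrow> restrict (\<lambda>s. \<epsilon> n s \<omega>) (Y n))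
        (insert None (Some ` {1..N}))"
    (* the fixed route *)
    and y_sub: "y \<subseteq> Seg"
    (* part (1): super-segment partition and shrinkage functions *)
    and part: "partition_on y P"
    and phi0: "\<And>S. S \<in> P \<Longrightarrow> \<phi> S 0 = 0"
    (* part (2): neighbourhood of historical routes *)
    and D_hist: "D \<subseteq> Y ` {1..N}"
    and phiD0: "\<phi>D 0 = 0"
  shows
    "risk M \<theta> y (gseg_est Y N \<theta> \<epsilon> \<mu> P \<phi>) =
       (\<Sum>S\<in>P. \<Sum>T\<in>P. real (Ncnt Y N (S \<union> T)) / (real (Ncnt Y N S) * real (Ncnt Y N T))
              * \<phi> S (Ncnt Y N S) * \<phi> T (Ncnt Y N T) * (\<Sum>s\<in>S. \<Sum>t\<in>T. \<sigma> s t))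
       + (\<Sum>S\<in>P. (1 - \<phi> S (Ncnt Y N S))\<^sup>2 * real (card S) * \<tau>\<^sup>2)
     \<and>
     risk M \<theta> y (route_est Y N \<theta> \<epsilon> \<mu> y D \<phi>D) =
       (\<phi>D (Mnb Y N D) / real (Mnb Y N D))\<^sup>2
          * (\<Sum>s\<in>\<Union>D. \<Sum>t\<in>\<Union>D. real (Nnb2 Y N D s t) * \<sigma> s t)
       + (\<phi>D (Mnb Y N D) * (ybar Y N D - real (card y)) * \<mu>)\<^sup>2
       + (\<Sum>s\<in>\<Union>D - y. (\<phi>D (Mnb Y N D) * real (Nnb1 Y N D s) / real (Mnb Y N D))\<^sup>2 * \<tau>\<^sup>2)
       + (\<Sum>s\<in>y. (1 - \<phi>D (Mnb Y N D) * real (Nnb1 Y N D s) / real (Mnb Y N D))\<^sup>2 * \<tau>\<^sup>2)"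
proof -
  interpret P: prob_space M by (rule prob)
  have fm: "finite_measure M" by (rule P.finite_measure_axioms)
  define d where "d = (\<lambda>s \<omega>. \<theta> s \<omega> - \<mu>)"
  have Ysub: "\<And>n. n \<in> {1..N} \<Longrightarrow> Y n \<subseteq> Seg" using routes by blast
  have finY: "\<And>n. n \<in> {1..N} \<Longrightarrow> finite (Y n)" using Ysub finSeg finite_subset by blast
  have sqi_d: "\<And>s. s \<in> Seg \<Longrightarrow> sqi M (d s)"
  proof -
    fix s assume s: "s \<in> Seg"
    have "sqi M (\<lambda>\<omega>. \<theta> s \<omega> + (- \<mu>))"
      by (rule sqi_add) (use th_meas[OF s] th_int2[OF s] sqi_const[OF fm] in \<open>auto simp: sqi_def\<close>)
    then show "sqi M (d s)" by (simp add: d_def)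
  qed
  have sqi_e: "\<And>n s. n \<in> {1..N} \<Longrightarrow> s \<in> Y n \<Longrightarrow> sqi M (\<epsilon> n s)"
    using eps_meas eps_int2 unfolding sqi_def by blast
  have Ed: "\<And>s. s \<in> Seg \<Longrightarrow> integral\<^sup>L M (d s) = 0"
    using th_int th_mean by (simp add: d_def P.prob_space)
  have C1: "\<And>s t. s \<in> Seg \<Longrightarrow> t \<in> Seg \<Longrightarrow>
      integral\<^sup>L M (\<lambda>\<omega>. d s \<omega> * d t \<omega>) = (if s = t then \<tau>\<^sup>2 else 0)"
  proof -
    fix s t assume s: "s \<in> Seg" and t: "t \<in> Seg"
    show "integral\<^sup>L M (\<lambda>\<omega>. d s \<omega> * d t \<omega>) = (if s = t then \<tau>\<^sup>2 else 0)"
    proof (cases "s = t")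
      case True
      then show ?thesis using th_var[OF s] by (simp add: d_def power2_eq_square)
    next
      case False
      have "P.indep_var borel (\<lambda>\<omega>. (\<lambda>x. x - \<mu>) (\<theta> s \<omega>)) borel (\<lambda>\<omega>. (\<lambda>x. x - \<mu>) (\<theta> t \<omega>))"
        by (rule P.indep_pair[OF th_indep s t False]) auto
      then have iv: "P.indep_var borel (d s) borel (d t)" by (simp add: d_def)
      have "integral\<^sup>L M (\<lambda>\<omega>. d s \<omega> * d t \<omega>) = integral\<^sup>L M (d s) * integral\<^sup>L M (d t)"
        by (rule P.indep_var_lebesgue_integral[OF iv sqi_int[OF fm sqi_d[OF s]] sqi_int[OF fm sqi_d[OF t]]])
      then show ?thesis using False Ed[OF s] by simp
    qed
  qed
  have C2: "\<And>s n t. s \<in> Seg \<Longrightarrow> n \<in> {1..N} \<Longrightarrow> t \<in> Y n \<Longrightarrow>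
      integral\<^sup>L M (\<lambda>\<omega>. d s \<omega> * \<epsilon> n t \<omega>) = 0"
  proof -
    fix s n t assume s: "s \<in> Seg" and n: "n \<in> {1..N}" and t: "t \<in> Y n"
    have "P.indep_var borel
      (\<lambda>\<omega>. (\<lambda>f. f s - \<mu>) ((\<lambda>i \<omega>. case i of None \<Rightarrow> restrict (\<lambda>s. \<theta> s \<omega>) Seg | Some n \<Rightarrow> restrict (\<lambda>s. \<epsilon> n s \<omega>) (Y n)) None \<omega>))
      borel
      (\<lambda>\<omega>. (\<lambda>f. f t) ((\<lambda>i \<omega>. case i of None \<Rightarrow> restrict (\<lambda>s. \<theta> s \<omega>) Seg | Some n \<Rightarrow> restrict (\<lambda>s. \<epsilon> n s \<omega>) (Y n)) (Some n) \<omega>))"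
      by (rule P.indep_pair[OF indep]) (use s n t in \<open>auto intro!: borel_measurable_diff measurable_component_singleton\<close>)
    then have iv: "P.indep_var borel (d s) borel (\<epsilon> n t)" using s t by (simp add: d_def)
    have "integral\<^sup>L M (\<lambda>\<omega>. d s \<omega> * \<epsilon> n t \<omega>) = integral\<^sup>L M (d s) * integral\<^sup>L M (\<epsilon> n t)"
      by (rule P.indep_var_lebesgue_integral[OF iv sqi_int[OF fm sqi_d[OF s]] eps_int[OF n t]])
    then show "integral\<^sup>L M (\<lambda>\<omega>. d s \<omega> * \<epsilon> n t \<omega>) = 0" using eps_mean[OF n t] by simp
  qed
  have C2': "\<And>s n t. s \<in> Seg \<Longrightarrow> n \<in> {1..N} \<Longrightarrow> t \<in> Y n \<Longrightarrow>
      integral\<^sup>L M (\<lambda>\<omega>. \<epsilon> n t \<omega> * d s \<omega>) = 0"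
    using C2 by (simp add: mult.commute)
  have C3: "\<And>n m s t. n \<in> {1..N} \<Longrightarrow> m \<in> {1..N} \<Longrightarrow> s \<in> Y n \<Longrightarrow> t \<in> Y m \<Longrightarrow>
      integral\<^sup>L M (\<lambda>\<omega>. \<epsilon> n s \<omega> * \<epsilon> m t \<omega>) = (if n = m then \<sigma> s t else 0)"
  proof -
    fix n m s t assume n: "n \<in> {1..N}" and m: "m \<in> {1..N}" and s: "s \<in> Y n" and t: "t \<in> Y m"
    show "integral\<^sup>L M (\<lambda>\<omega>. \<epsilon> n s \<omega> * \<epsilon> m t \<omega>) = (if n = m then \<sigma> s t else 0)"
    proof (cases "n = m")
      case True
      then have t': "t \<in> Y n" using t by simp
      have "integral\<^sup>L M (\<lambda>\<omega>. \<epsilon> n s \<omega> * \<epsilon> n t \<omega>) = \<sigma> s t"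
        using eps_cov[OF n s t'] unfolding eps_mean[OF n s] eps_mean[OF n t'] by simp
      then show ?thesis using True by simp
    next
      case False
      have "P.indep_var borel
        (\<lambda>\<omega>. (\<lambda>f. f s) ((\<lambda>i \<omega>. case i of None \<Rightarrow> restrict (\<lambda>s. \<theta> s \<omega>) Seg | Some n \<Rightarrow> restrict (\<lambda>s. \<epsilon> n s \<omega>) (Y n)) (Some n) \<omega>))
        borel
        (\<lambda>\<omega>. (\<lambda>f. f t) ((\<lambda>i \<omega>. case i of None \<Rightarrow> restrict (\<lambda>s. \<theta> s \<omega>) Seg | Some n \<Rightarrow> restrict (\<lambda>s. \<epsilon> n s \<omega>) (Y n)) (Some m) \<omega>))"
        by (rule P.indep_pair[OF indep]) (use n m s t False in \<open>auto intro!: measurable_component_singleton\<close>)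
      then have iv: "P.indep_var borel (\<epsilon> n s) borel (\<epsilon> m t)" using s t by simp
      have "integral\<^sup>L M (\<lambda>\<omega>. \<epsilon> n s \<omega> * \<epsilon> m t \<omega>) = integral\<^sup>L M (\<epsilon> n s) * integral\<^sup>L M (\<epsilon> m t)"
        by (rule P.indep_var_lebesgue_integral[OF iv eps_int[OF n s] eps_int[OF m t]])
      then show ?thesis using False eps_mean[OF n s] by simp
    qed
  qed
  have part1: "risk M \<theta> y (gseg_est Y N \<theta> \<epsilon> \<mu> P \<phi>) =
       (\<Sum>S\<in>P. \<Sum>T\<in>P. real (Ncnt Y N (S \<union> T)) / (real (Ncnt Y N S) * real (Ncnt Y N T))
              * \<phi> S (Ncnt Y N S) * \<phi> T (Ncnt Y N T) * (\<Sum>s\<in>S. \<Sum>t\<in>T. \<sigma> s t))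
       + (\<Sum>S\<in>P. (1 - \<phi> S (Ncnt Y N S))\<^sup>2 * real (card S) * \<tau>\<^sup>2)"
  proof -
    have Pu: "\<Union>P = y" and Pd: "disjoint P" using part unfolding partition_on_def by auto
    have finy: "finite y" using y_sub finSeg finite_subset by blast
    have PS: "\<And>S. S \<in> P \<Longrightarrow> S \<subseteq> y" using Pu by blast
    have finS: "\<And>S. S \<in> P \<Longrightarrow> finite S" using PS finy finite_subset by blast
    have finP: "finite P" using Pu finy finite_UnionD by blast
    have SSeg: "\<And>S s. S \<in> P \<Longrightarrow> s \<in> S \<Longrightarrow> s \<in> Seg" using PS y_sub by blast
    have disj: "\<And>S T. S \<in> P \<Longrightarrow> T \<in> P \<Longrightarrow> S \<noteq> T \<Longrightarrow> S \<inter> T = {}"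
      using Pd by (auto simp: pairwise_def disjnt_def)
    define A where "A = (\<lambda>S. {n \<in> {1..N}. S \<subseteq> Y n})"
    define k where "k = (\<lambda>S. \<phi> S (Ncnt Y N S) / real (Ncnt Y N S))"
    define a where "a = (\<lambda>S. - (1 - \<phi> S (Ncnt Y N S)))"
    define Dd where "Dd = (\<lambda>S \<omega>. \<Sum>s\<in>S. d s \<omega>)"
    define Z where "Z = (\<lambda>S \<omega>. \<Sum>p\<in>A S \<times> S. \<epsilon> (fst p) (snd p) \<omega>)"
    define E where "E = (\<lambda>S \<omega>. a S * Dd S \<omega> + k S * Z S \<omega>)"
    have finA: "\<And>S. finite (A S)" by (simp add: A_def)
    have cardA: "\<And>S. card (A S) = Ncnt Y N S" by (simp add: A_def Ncnt_def)
    have AZ: "\<And>S p. p \<in> A S \<times> S \<Longrightarrow> fst p \<in> {1..N} \<and> snd p \<in> Y (fst p)" by (auto simp: A_def)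
    have sqi_Dd: "\<And>S. S \<in> P \<Longrightarrow> sqi M (Dd S)"
      unfolding Dd_def by (rule sqi_sum[OF fm]) (auto intro: sqi_d SSeg)
    have sqi_Z: "\<And>S. S \<in> P \<Longrightarrow> sqi M (Z S)"
      unfolding Z_def by (rule sqi_sum[OF fm]) (use AZ sqi_e in blast)
    have sqi_E: "\<And>S. S \<in> P \<Longrightarrow> sqi M (E S)"
      unfolding E_def by (intro sqi_add sqi_cmult sqi_Dd sqi_Z)
    have err: "\<And>\<omega>. gseg_est Y N \<theta> \<epsilon> \<mu> P \<phi> \<omega> - (\<Sum>s\<in>y. \<theta> s \<omega>) = (\<Sum>S\<in>P. E S \<omega>)"
    proof -
      fix \<omega>
      have U: "(\<Sum>s\<in>y. \<theta> s \<omega>) = (\<Sum>S\<in>P. \<Sum>s\<in>S. \<theta> s \<omega>)"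
        using sum.Union_disjoint[of P "\<lambda>s. \<theta> s \<omega>"] finS disj Pu by auto
      have each: "(1 - \<phi> S (Ncnt Y N S)) * real (card S) * \<mu> + \<phi> S (Ncnt Y N S) *
          ((\<Sum>n\<in>{n \<in> {1..N}. S \<subseteq> Y n}. \<Sum>s\<in>S. Tobs \<theta> \<epsilon> n s \<omega>) / real (Ncnt Y N S))
          - (\<Sum>s\<in>S. \<theta> s \<omega>) = E S \<omega>" if S: "S \<in> P" for S
      proof -
        have AS: "{n \<in> {1..N}. S \<subseteq> Y n} = A S" by (simp add: A_def)
        have Zs: "Z S \<omega> = (\<Sum>n\<in>A S. \<Sum>s\<in>S. \<epsilon> n s \<omega>)" unfolding Z_def by (simp add: sum.cartesian_product')
        have T: "(\<Sum>n\<in>A S. \<Sum>s\<in>S. Tobs \<theta> \<epsilon> n s \<omega>) = real (Ncnt Y N S) * (\<Sum>s\<in>S. \<theta> s \<omega>) + Z S \<omega>"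
          by (simp add: Zs Tobs_def sum.distrib cardA)
        have Dds: "Dd S \<omega> = (\<Sum>s\<in>S. \<theta> s \<omega>) - real (card S) * \<mu>"
          by (simp add: Dd_def d_def sum_subtractf)
        show ?thesis
        proof (cases "Ncnt Y N S = 0")
          case True
          then have "\<phi> S (Ncnt Y N S) = 0" using phi0[OF S] by simp
          with True show ?thesis by (simp add: E_def a_def k_def Dds AS T algebra_simps)
        next
          case False
          then show ?thesis unfolding AS by (simp add: E_def a_def k_def Dds T field_simps)
        qed
      qed
      have "gseg_est Y N \<theta> \<epsilon> \<mu> P \<phi> \<omega> - (\<Sum>s\<in>y. \<theta> s \<omega>) =
         (\<Sum>S\<in>P. (1 - \<phi> S (Ncnt Y N S)) * real (card S) * \<mu> + \<phi> S (Ncnt Y N S) *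
          ((\<Sum>n\<in>{n \<in> {1..N}. S \<subseteq> Y n}. \<Sum>s\<in>S. Tobs \<theta> \<epsilon> n s \<omega>) / real (Ncnt Y N S))
          - (\<Sum>s\<in>S. \<theta> s \<omega>))"
        by (simp add: gseg_est_def U sum_subtractf)
      also have "\<dots> = (\<Sum>S\<in>P. E S \<omega>)" by (rule sum.cong[OF refl each])
      finally show "gseg_est Y N \<theta> \<epsilon> \<mu> P \<phi> \<omega> - (\<Sum>s\<in>y. \<theta> s \<omega>) = (\<Sum>S\<in>P. E S \<omega>)" .
    qed
    have "risk M \<theta> y (gseg_est Y N \<theta> \<epsilon> \<mu> P \<phi>) = integral\<^sup>L M (\<lambda>\<omega>. (\<Sum>S\<in>P. E S \<omega>) * (\<Sum>T\<in>P. E T \<omega>))"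
      unfolding risk_def err by (simp add: power2_eq_square)
    also have "\<dots> = (\<Sum>S\<in>P. \<Sum>T\<in>P. integral\<^sup>L M (\<lambda>\<omega>. E S \<omega> * E T \<omega>))"
      by (rule E_prod_sums[OF finP finP]) (auto intro: sqi_E)
    also have "\<dots> = (\<Sum>S\<in>P. \<Sum>T\<in>P. k S * k T * (real (Ncnt Y N (S \<union> T)) * (\<Sum>s\<in>S. \<Sum>t\<in>T. \<sigma> s t))
          + (if S = T then (a S)\<^sup>2 * (real (card S) * \<tau>\<^sup>2) else 0))"
    proof (intro sum.cong refl)
      fix S T assume S: "S \<in> P" and T: "T \<in> P"
      have e1: "integral\<^sup>L M (\<lambda>\<omega>. Dd S \<omega> * Dd T \<omega>) = (if S = T then real (card S) * \<tau>\<^sup>2 else 0)"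
      proof -
        have "integral\<^sup>L M (\<lambda>\<omega>. Dd S \<omega> * Dd T \<omega>) = (\<Sum>s\<in>S. \<Sum>t\<in>T. integral\<^sup>L M (\<lambda>\<omega>. d s \<omega> * d t \<omega>))"
          unfolding Dd_def by (rule E_prod_sums) (auto intro: finS S T sqi_d SSeg)
        also have "\<dots> = (\<Sum>s\<in>S. \<Sum>t\<in>T. if s = t then \<tau>\<^sup>2 else 0)"
          by (intro sum.cong refl C1) (auto intro: SSeg S T)
        also have "\<dots> = (\<Sum>s\<in>S. if s \<in> T then \<tau>\<^sup>2 else 0)"
          using finS[OF T] by simp
        also have "\<dots> = (if S = T then real (card S) * \<tau>\<^sup>2 else 0)"
        proof (cases "S = T")
          case True then show ?thesis by simp
        next
          case False
          then have "S \<inter> T = {}" using disj S T by blast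
          then have "(\<Sum>s\<in>S. if s \<in> T then \<tau>\<^sup>2 else 0) = 0" by (intro sum.neutral) auto
          then show ?thesis using False by simp
        qed
        finally show ?thesis .
      qed
      have e2: "integral\<^sup>L M (\<lambda>\<omega>. Dd S \<omega> * Z T \<omega>) = 0"
      proof -
        have "integral\<^sup>L M (\<lambda>\<omega>. Dd S \<omega> * Z T \<omega>) =
            (\<Sum>s\<in>S. \<Sum>p\<in>A T \<times> T. integral\<^sup>L M (\<lambda>\<omega>. d s \<omega> * \<epsilon> (fst p) (snd p) \<omega>))"
          unfolding Dd_def Z_def by (rule E_prod_sums) (use finS S T finA finS AZ sqi_e sqi_d SSeg in auto)
        also have "\<dots> = 0"
        proof (intro sum.neutral ballI)
          fix s p assume "s \<in> S" "p \<in> A T \<times> T"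
          then show "integral\<^sup>L M (\<lambda>\<omega>. d s \<omega> * \<epsilon> (fst p) (snd p) \<omega>) = 0"
            using AZ C2 SSeg S by blast
        qed
        finally show ?thesis .
      qed
      have e3: "integral\<^sup>L M (\<lambda>\<omega>. Z S \<omega> * Dd T \<omega>) = 0"
      proof -
        have "integral\<^sup>L M (\<lambda>\<omega>. Z S \<omega> * Dd T \<omega>) =
            (\<Sum>p\<in>A S \<times> S. \<Sum>t\<in>T. integral\<^sup>L M (\<lambda>\<omega>. \<epsilon> (fst p) (snd p) \<omega> * d t \<omega>))"
          unfolding Dd_def Z_def by (rule E_prod_sums) (use finS S T finA finS AZ sqi_e sqi_d SSeg in auto)
        also have "\<dots> = 0"
        proof (intro sum.neutral ballI)
          fix t p assume "t \<in> T" "p \<in> A S \<times> S"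
          then show "integral\<^sup>L M (\<lambda>\<omega>. \<epsilon> (fst p) (snd p) \<omega> * d t \<omega>) = 0"
            using AZ C2' SSeg T by blast
        qed
        finally show ?thesis .
      qed
      have e4: "integral\<^sup>L M (\<lambda>\<omega>. Z S \<omega> * Z T \<omega>) = real (Ncnt Y N (S \<union> T)) * (\<Sum>s\<in>S. \<Sum>t\<in>T. \<sigma> s t)"
      proof -
        have "integral\<^sup>L M (\<lambda>\<omega>. Z S \<omega> * Z T \<omega>) =
            (\<Sum>p\<in>A S \<times> S. \<Sum>q\<in>A T \<times> T. integral\<^sup>L M (\<lambda>\<omega>. \<epsilon> (fst p) (snd p) \<omega> * \<epsilon> (fst q) (snd q) \<omega>))"
          unfolding Z_def by (rule E_prod_sums) (use finS S T finA AZ sqi_e in auto)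
        also have "\<dots> = (\<Sum>p\<in>A S \<times> S. \<Sum>q\<in>A T \<times> T. if fst p = fst q then \<sigma> (snd p) (snd q) else 0)"
          by (intro sum.cong refl C3) (use AZ in blast)+
        also have "\<dots> = (\<Sum>n\<in>A S. \<Sum>s\<in>S. \<Sum>m\<in>A T. \<Sum>t\<in>T. if n = m then \<sigma> s t else 0)"
          by (simp add: sum.cartesian_product' cong: if_cong)
        also have "\<dots> = (\<Sum>n\<in>A S. \<Sum>s\<in>S. if n \<in> A T then (\<Sum>t\<in>T. \<sigma> s t) else 0)"
        proof (intro sum.cong refl)
          fix n s
          have "(\<Sum>m\<in>A T. \<Sum>t\<in>T. if n = m then \<sigma> s t else 0) = (\<Sum>m\<in>A T. if n = m then (\<Sum>t\<in>T. \<sigma> s t) else 0)"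
            by (intro sum.cong refl) auto
          also have "\<dots> = (if n \<in> A T then (\<Sum>t\<in>T. \<sigma> s t) else 0)" using finA by simp
          finally show "(\<Sum>m\<in>A T. \<Sum>t\<in>T. if n = m then \<sigma> s t else 0) = (if n \<in> A T then (\<Sum>t\<in>T. \<sigma> s t) else 0)" .
        qed
        also have "\<dots> = (\<Sum>n\<in>A S. if n \<in> A T then (\<Sum>s\<in>S. \<Sum>t\<in>T. \<sigma> s t) else 0)"
          by (intro sum.cong refl) auto
        also have "\<dots> = (\<Sum>n\<in>{n \<in> A S. n \<in> A T}. (\<Sum>s\<in>S. \<Sum>t\<in>T. \<sigma> s t))"
          by (rule sum.inter_filter[symmetric]) (rule finA)
        also have "{n \<in> A S. n \<in> A T} = A (S \<union> T)" by (auto simp: A_def)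
        finally show ?thesis by (simp add: cardA)
      qed
      show "integral\<^sup>L M (\<lambda>\<omega>. E S \<omega> * E T \<omega>) = k S * k T * (real (Ncnt Y N (S \<union> T)) * (\<Sum>s\<in>S. \<Sum>t\<in>T. \<sigma> s t))
          + (if S = T then (a S)\<^sup>2 * (real (card S) * \<tau>\<^sup>2) else 0)"
        unfolding E_def bilin[OF sqi_Dd[OF S] sqi_Z[OF S] sqi_Dd[OF T] sqi_Z[OF T]] e1 e2 e3 e4
        by (auto simp: power2_eq_square algebra_simps)
    qed
    also have "\<dots> = (\<Sum>S\<in>P. \<Sum>T\<in>P. k S * k T * (real (Ncnt Y N (S \<union> T)) * (\<Sum>s\<in>S. \<Sum>t\<in>T. \<sigma> s t)))
          + (\<Sum>S\<in>P. (a S)\<^sup>2 * (real (card S) * \<tau>\<^sup>2))"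
    proof -
      have "\<And>S. S \<in> P \<Longrightarrow> (\<Sum>T\<in>P. if S = T then (a S)\<^sup>2 * (real (card S) * \<tau>\<^sup>2) else 0) = (a S)\<^sup>2 * (real (card S) * \<tau>\<^sup>2)"
        using finP by simp
      then have "(\<Sum>S\<in>P. \<Sum>T\<in>P. if S = T then (a S)\<^sup>2 * (real (card S) * \<tau>\<^sup>2) else 0) = (\<Sum>S\<in>P. (a S)\<^sup>2 * (real (card S) * \<tau>\<^sup>2))"
        by (rule sum.cong[OF refl])
      then show ?thesis by (simp add: sum.distrib)
    qed
    also have "\<dots> = (\<Sum>S\<in>P. \<Sum>T\<in>P. real (Ncnt Y N (S \<union> T)) / (real (Ncnt Y N S) * real (Ncnt Y N T))
              * \<phi> S (Ncnt Y N S) * \<phi> T (Ncnt Y N T) * (\<Sum>s\<in>S. \<Sum>t\<in>T. \<sigma> s t))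
       + (\<Sum>S\<in>P. (1 - \<phi> S (Ncnt Y N S))\<^sup>2 * real (card S) * \<tau>\<^sup>2)"
    proof -
      have asq: "\<And>S. (a S)\<^sup>2 = (1 - \<phi> S (Ncnt Y N S))\<^sup>2" by (simp add: a_def power2_eq_square algebra_simps)
      show ?thesis
        by (intro arg_cong2[where f="(+)"] sum.cong refl) (simp_all add: k_def asq divide_inverse mult_ac)
    qed
    finally show ?thesis .
  qed
  have part2: "risk M \<theta> y (route_est Y N \<theta> \<epsilon> \<mu> y D \<phi>D) =
       (\<phi>D (Mnb Y N D) / real (Mnb Y N D))\<^sup>2
          * (\<Sum>s\<in>\<Union>D. \<Sum>t\<in>\<Union>D. real (Nnb2 Y N D s t) * \<sigma> s t)
       + (\<phi>D (Mnb Y N D) * (ybar Y N D - real (card y)) * \<mu>)\<^sup>2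
       + (\<Sum>s\<in>\<Union>D - y. (\<phi>D (Mnb Y N D) * real (Nnb1 Y N D s) / real (Mnb Y N D))\<^sup>2 * \<tau>\<^sup>2)
       + (\<Sum>s\<in>y. (1 - \<phi>D (Mnb Y N D) * real (Nnb1 Y N D s) / real (Mnb Y N D))\<^sup>2 * \<tau>\<^sup>2)"
  proof -
    define B where "B = {n \<in> {1..N}. Y n \<in> D}"
    define k where "k = \<phi>D (Mnb Y N D) / real (Mnb Y N D)"
    define U where "U = \<Union>D"
    define V where "V = U \<union> y"
    have finB: "finite B" by (simp add: B_def)
    have BN: "\<And>n. n \<in> B \<Longrightarrow> n \<in> {1..N}" by (simp add: B_def)
    have BU: "\<And>n. n \<in> B \<Longrightarrow> Y n \<subseteq> U" by (auto simp: B_def U_def)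
    have USeg: "U \<subseteq> Seg"
    proof
      fix x assume "x \<in> U"
      then obtain X where X: "X \<in> D" "x \<in> X" by (auto simp: U_def)
      then obtain n where n: "n \<in> {1..N}" "X = Y n" using D_hist by blast
      then show "x \<in> Seg" using Ysub X by blast
    qed
    have VSeg: "V \<subseteq> Seg" using USeg y_sub by (auto simp: V_def)
    have finU: "finite U" using USeg finSeg finite_subset by blast
    have finV: "finite V" using VSeg finSeg finite_subset by blast
    have BV: "\<And>n. n \<in> B \<Longrightarrow> Y n \<subseteq> V" using BU by (auto simp: V_def)
    have finYB: "\<And>n. n \<in> B \<Longrightarrow> finite (Y n)" using BN finY by blast
    have cardB: "card B = Mnb Y N D" by (simp add: B_def Mnb_def)
    have Nc: "\<And>s. card {n \<in> B. s \<in> Y n} = Nnb1 Y N D s"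
      unfolding B_def Nnb1_def by (rule arg_cong[where f=card]) auto
    have Nc2: "\<And>x. card {n \<in> B. x \<in> Y n \<times> Y n} = Nnb2 Y N D (fst x) (snd x)"
      unfolding B_def Nnb2_def by (rule arg_cong[where f=card]) (auto simp: mem_Times_iff)
    have SigE: "\<And>p. p \<in> Sigma B Y \<Longrightarrow> fst p \<in> {1..N} \<and> snd p \<in> Y (fst p)" using BN by auto
    define a where "a = (\<lambda>s. k * real (Nnb1 Y N D s) - (if s \<in> y then 1 else 0))"
    define c where "c = \<phi>D (Mnb Y N D) * (ybar Y N D - real (card y)) * \<mu>"
    define X where "X = (\<lambda>\<omega>. \<Sum>s\<in>V. a s * d s \<omega>)"
    define Zr where "Zr = (\<lambda>\<omega>. \<Sum>p\<in>Sigma B Y. k * \<epsilon> (fst p) (snd p) \<omega>)"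
    have err: "\<And>\<omega>. route_est Y N \<theta> \<epsilon> \<mu> y D \<phi>D \<omega> - (\<Sum>s\<in>y. \<theta> s \<omega>) = c + X \<omega> + Zr \<omega>"
    proof -
      fix \<omega>
      define Th where "Th = (\<Sum>s\<in>V. real (Nnb1 Y N D s) * \<theta> s \<omega>)"
      define Cn where "Cn = (\<Sum>s\<in>V. real (Nnb1 Y N D s))"
      define Ey where "Ey = (\<Sum>n\<in>B. \<Sum>s\<in>Y n. \<epsilon> n s \<omega>)"
      have s1: "(\<Sum>n\<in>B. \<Sum>s\<in>Y n. \<theta> s \<omega>) = Th"
        using swap_count[of V B Y "\<lambda>s. \<theta> s \<omega>", OF finV finB BV] by (simp add: Th_def Nc)
      have s2: "(\<Sum>n\<in>B. real (card (Y n))) = Cn"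
        using swap_count[of V B Y "\<lambda>s. 1", OF finV finB BV] by (simp add: Cn_def Nc)
      have Vy: "V \<inter> y = y" by (auto simp: V_def)
      have s3: "(\<Sum>s\<in>V. (if s \<in> y then 1 else 0) * \<theta> s \<omega>) = (\<Sum>s\<in>y. \<theta> s \<omega>)"
      proof -
        have "(\<Sum>s\<in>V. (if s \<in> y then 1 else 0) * \<theta> s \<omega>) = (\<Sum>s\<in>V. if s \<in> y then \<theta> s \<omega> else 0)"
          by (intro sum.cong) auto
        also have "\<dots> = (\<Sum>s\<in>V \<inter> y. \<theta> s \<omega>)" by (rule sum.inter_restrict[symmetric]) (rule finV)
        finally show ?thesis by (simp only: Vy)
      qed
      have s4: "(\<Sum>s\<in>V. (if s \<in> y then 1 else 0 :: real)) = real (card y)"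
      proof -
        have "(\<Sum>s\<in>V. (if s \<in> y then 1 else 0 :: real)) = (\<Sum>s\<in>V \<inter> y. 1)" by (rule sum.inter_restrict[symmetric]) (rule finV)
        then show ?thesis by (simp add: Vy)
      qed
      have ZrE: "Zr \<omega> = k * Ey"
      proof -
        have "Zr \<omega> = (\<Sum>p\<in>Sigma B Y. k * \<epsilon> (fst p) (snd p) \<omega>)" by (simp add: Zr_def)
        also have "\<dots> = (\<Sum>n\<in>B. \<Sum>s\<in>Y n. k * \<epsilon> n s \<omega>)"
          by (rule sum_Sigma_fst_snd[of B Y "\<lambda>n s. k * \<epsilon> n s \<omega>", OF finB finYB])
        also have "\<dots> = k * Ey" by (simp add: Ey_def sum_distrib_left)
        finally show ?thesis .
      qed
      have yb: "ybar Y N D = Cn / real (Mnb Y N D)"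
        unfolding ybar_def B_def[symmetric] s2 by (rule refl)
      have pw: "\<And>s. a s * d s \<omega> = k * (real (Nnb1 Y N D s) * \<theta> s \<omega>) - (if s \<in> y then 1 else 0) * \<theta> s \<omega>
          - (k * \<mu>) * real (Nnb1 Y N D s) + \<mu> * (if s \<in> y then 1 else 0)"
        by (simp add: a_def d_def algebra_simps)
      have Xe: "X \<omega> = k * Th - (\<Sum>s\<in>V. (if s \<in> y then 1 else 0) * \<theta> s \<omega>) - k * \<mu> * Cn + \<mu> * (\<Sum>s\<in>V. (if s \<in> y then 1 else 0 :: real))"
      proof -
        have "X \<omega> = (\<Sum>s\<in>V. k * (real (Nnb1 Y N D s) * \<theta> s \<omega>) - (if s \<in> y then 1 else 0) * \<theta> s \<omega>
          - (k * \<mu>) * real (Nnb1 Y N D s) + \<mu> * (if s \<in> y then 1 else 0))"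
          unfolding X_def pw by (rule refl)
        also have "\<dots> = k * Th - (\<Sum>s\<in>V. (if s \<in> y then 1 else 0) * \<theta> s \<omega>) - k * \<mu> * Cn + \<mu> * (\<Sum>s\<in>V. (if s \<in> y then 1 else 0 :: real))"
          by (simp add: sum.distrib sum_subtractf Th_def Cn_def sum_distrib_left mult.assoc)
        finally show ?thesis .
      qed
      have R: "route_est Y N \<theta> \<epsilon> \<mu> y D \<phi>D \<omega> =
          (1 - \<phi>D (Mnb Y N D)) * real (card y) * \<mu> + \<phi>D (Mnb Y N D) * ((Th + Ey) / real (Mnb Y N D))"
      proof -
        have "(\<Sum>n\<in>B. \<Sum>s\<in>Y n. Tobs \<theta> \<epsilon> n s \<omega>) = Th + Ey"
          unfolding Tobs_def sum.distrib s1 Ey_def by (rule refl)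
        then show ?thesis unfolding route_est_def B_def[symmetric] by simp
      qed
      show "route_est Y N \<theta> \<epsilon> \<mu> y D \<phi>D \<omega> - (\<Sum>s\<in>y. \<theta> s \<omega>) = c + X \<omega> + Zr \<omega>"
        unfolding R Xe ZrE s3 s4 c_def yb k_def divide_inverse by (simp add: algebra_simps)
    qed
    have sqi_X: "sqi M X" unfolding X_def
      by (rule sqi_sum[OF fm], rule sqi_cmult, rule sqi_d) (use VSeg in auto)
    have sqi_Zr: "sqi M Zr" unfolding Zr_def
      by (rule sqi_sum[OF fm], rule sqi_cmult) (use SigE sqi_e in blast)
    have EX: "integral\<^sup>L M X = 0"
    proof -
      have "integral\<^sup>L M X = (\<Sum>s\<in>V. integral\<^sup>L M (\<lambda>\<omega>. a s * d s \<omega>))"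
        unfolding X_def
      proof (rule Bochner_Integration.integral_sum)
        fix s assume "s \<in> V"
        then have s: "s \<in> Seg" using VSeg by blast
        show "integrable M (\<lambda>\<omega>. a s * d s \<omega>)"
          by (rule integrable_mult_right) (rule sqi_int[OF fm sqi_d[OF s]])
      qed
      also have "\<dots> = 0"
      proof (rule sum.neutral, rule ballI)
        fix s assume "s \<in> V"
        then have s: "s \<in> Seg" using VSeg by blast
        show "integral\<^sup>L M (\<lambda>\<omega>. a s * d s \<omega>) = 0" by (simp add: Ed[OF s])
      qed
      finally show ?thesis .
    qed
    have EZ: "integral\<^sup>L M Zr = 0"
    proof -
      have "integral\<^sup>L M Zr = (\<Sum>p\<in>Sigma B Y. integral\<^sup>L M (\<lambda>\<omega>. k * \<epsilon> (fst p) (snd p) \<omega>))"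
        unfolding Zr_def
      proof (rule Bochner_Integration.integral_sum)
        fix p assume "p \<in> Sigma B Y"
        then have p: "fst p \<in> {1..N}" "snd p \<in> Y (fst p)" using SigE by blast+
        show "integrable M (\<lambda>\<omega>. k * \<epsilon> (fst p) (snd p) \<omega>)"
          by (rule integrable_mult_right) (rule eps_int[OF p])
      qed
      also have "\<dots> = 0"
      proof (rule sum.neutral, rule ballI)
        fix p assume "p \<in> Sigma B Y"
        then have p: "fst p \<in> {1..N}" "snd p \<in> Y (fst p)" using SigE by blast+
        show "integral\<^sup>L M (\<lambda>\<omega>. k * \<epsilon> (fst p) (snd p) \<omega>) = 0"
          by (simp add: eps_mean[OF p])
      qed
      finally show ?thesis .
    qed
    have EXZ: "integral\<^sup>L M (\<lambda>\<omega>. X \<omega> * Zr \<omega>) = 0"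
    proof -
      have "integral\<^sup>L M (\<lambda>\<omega>. X \<omega> * Zr \<omega>) =
          (\<Sum>s\<in>V. \<Sum>p\<in>Sigma B Y. integral\<^sup>L M (\<lambda>\<omega>. (a s * d s \<omega>) * (k * \<epsilon> (fst p) (snd p) \<omega>)))"
        unfolding X_def Zr_def
        by (rule E_prod_sums) (use finV finB finYB VSeg SigE sqi_e sqi_d in \<open>auto intro!: sqi_cmult\<close>)
      also have "\<dots> = 0"
      proof (intro sum.neutral ballI)
        fix s p assume "s \<in> V" "p \<in> Sigma B Y"
        then show "integral\<^sup>L M (\<lambda>\<omega>. (a s * d s \<omega>) * (k * \<epsilon> (fst p) (snd p) \<omega>)) = 0"
          using C2[of s "fst p" "snd p"] SigE VSeg by (auto simp: scal_int)
      qed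
      finally show ?thesis .
    qed
    have EX2: "integral\<^sup>L M (\<lambda>\<omega>. (X \<omega>)\<^sup>2) = (\<Sum>s\<in>V. (a s)\<^sup>2 * \<tau>\<^sup>2)"
    proof -
      have "integral\<^sup>L M (\<lambda>\<omega>. (X \<omega>)\<^sup>2) = (\<Sum>s\<in>V. \<Sum>t\<in>V. integral\<^sup>L M (\<lambda>\<omega>. (a s * d s \<omega>) * (a t * d t \<omega>)))"
        unfolding X_def power2_eq_square
        by (rule E_prod_sums) (use finV VSeg sqi_d in \<open>auto intro!: sqi_cmult\<close>)
      also have "\<dots> = (\<Sum>s\<in>V. \<Sum>t\<in>V. if s = t then a s * a t * \<tau>\<^sup>2 else 0)"
      proof (intro sum.cong refl)
        fix s t assume st: "s \<in> V" "t \<in> V"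
        then have "s \<in> Seg" "t \<in> Seg" using VSeg by auto
        then show "integral\<^sup>L M (\<lambda>\<omega>. (a s * d s \<omega>) * (a t * d t \<omega>)) = (if s = t then a s * a t * \<tau>\<^sup>2 else 0)"
          by (simp add: scal_int C1)
      qed
      also have "\<dots> = (\<Sum>s\<in>V. (a s)\<^sup>2 * \<tau>\<^sup>2)"
        using finV by (simp add: power2_eq_square)
      finally show ?thesis .
    qed
    have EZ2: "integral\<^sup>L M (\<lambda>\<omega>. (Zr \<omega>)\<^sup>2) = k\<^sup>2 * (\<Sum>s\<in>U. \<Sum>t\<in>U. real (Nnb2 Y N D s t) * \<sigma> s t)"
    proof -
      have "integral\<^sup>L M (\<lambda>\<omega>. (Zr \<omega>)\<^sup>2) = (\<Sum>p\<in>Sigma B Y. \<Sum>q\<in>Sigma B Y.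
            integral\<^sup>L M (\<lambda>\<omega>. (k * \<epsilon> (fst p) (snd p) \<omega>) * (k * \<epsilon> (fst q) (snd q) \<omega>)))"
        unfolding Zr_def power2_eq_square
        by (rule E_prod_sums) (use finB finYB SigE sqi_e in \<open>auto intro!: sqi_cmult\<close>)
      also have "\<dots> = (\<Sum>p\<in>Sigma B Y. \<Sum>q\<in>Sigma B Y. k * k * (if fst p = fst q then \<sigma> (snd p) (snd q) else 0))"
      proof (intro sum.cong refl)
        fix p q assume pq: "p \<in> Sigma B Y" "q \<in> Sigma B Y"
        then have "fst p \<in> {1..N}" "snd p \<in> Y (fst p)" "fst q \<in> {1..N}" "snd q \<in> Y (fst q)" using SigE by blast+
        then show "integral\<^sup>L M (\<lambda>\<omega>. (k * \<epsilon> (fst p) (snd p) \<omega>) * (k * \<epsilon> (fst q) (snd q) \<omega>)) =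
            k * k * (if fst p = fst q then \<sigma> (snd p) (snd q) else 0)"
          by (simp add: scal_int C3)
      qed
      also have "\<dots> = (\<Sum>p\<in>Sigma B Y. \<Sum>m\<in>B. \<Sum>t\<in>Y m. k * k * (if fst p = m then \<sigma> (snd p) t else 0))"
      proof (rule sum.cong[OF refl])
        fix p
        show "(\<Sum>q\<in>Sigma B Y. k * k * (if fst p = fst q then \<sigma> (snd p) (snd q) else 0)) =
          (\<Sum>m\<in>B. \<Sum>t\<in>Y m. k * k * (if fst p = m then \<sigma> (snd p) t else 0))"
          by (rule sum_Sigma_fst_snd[of B Y "\<lambda>m t. k * k * (if fst p = m then \<sigma> (snd p) t else 0)", OF finB finYB])
      qed
      also have "\<dots> = (\<Sum>n\<in>B. \<Sum>s\<in>Y n. \<Sum>m\<in>B. \<Sum>t\<in>Y m. k * k * (if n = m then \<sigma> s t else 0))"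
        by (rule sum_Sigma_fst_snd[of B Y "\<lambda>n s. \<Sum>m\<in>B. \<Sum>t\<in>Y m. k * k * (if n = m then \<sigma> s t else 0)", OF finB finYB])
      also have "\<dots> = (\<Sum>n\<in>B. \<Sum>s\<in>Y n. \<Sum>t\<in>Y n. k * k * \<sigma> s t)"
      proof (intro sum.cong refl)
        fix n s assume n: "n \<in> B"
        have "(\<Sum>m\<in>B. \<Sum>t\<in>Y m. k * k * (if n = m then \<sigma> s t else 0)) = (\<Sum>m\<in>B. if n = m then (\<Sum>t\<in>Y m. k * k * \<sigma> s t) else 0)"
          by (intro sum.cong refl) auto
        also have "\<dots> = (\<Sum>t\<in>Y n. k * k * \<sigma> s t)" using finB n by simp
        finally show "(\<Sum>m\<in>B. \<Sum>t\<in>Y m. k * k * (if n = m then \<sigma> s t else 0)) = (\<Sum>t\<in>Y n. k * k * \<sigma> s t)" .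
      qed
      also have "\<dots> = k * k * (\<Sum>n\<in>B. \<Sum>x\<in>Y n \<times> Y n. \<sigma> (fst x) (snd x))"
        by (simp add: sum_distrib_left sum.cartesian_product')
      also have "(\<Sum>n\<in>B. \<Sum>x\<in>Y n \<times> Y n. \<sigma> (fst x) (snd x)) = (\<Sum>x\<in>U \<times> U. real (Nnb2 Y N D (fst x) (snd x)) * \<sigma> (fst x) (snd x))"
        using swap_count[of "U \<times> U" B "\<lambda>n. Y n \<times> Y n" "\<lambda>x. \<sigma> (fst x) (snd x)"] finU finB BU
        by (auto simp: Nc2)
      also have "\<dots> = (\<Sum>s\<in>U. \<Sum>t\<in>U. real (Nnb2 Y N D s t) * \<sigma> s t)"
        by (simp add: sum.cartesian_product')
      finally show ?thesis by (simp add: power2_eq_square)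
    qed
    have "risk M \<theta> y (route_est Y N \<theta> \<epsilon> \<mu> y D \<phi>D) = integral\<^sup>L M (\<lambda>\<omega>. (c + X \<omega> + Zr \<omega>)\<^sup>2)"
      unfolding risk_def err ..
    also have "\<dots> = c\<^sup>2 + (\<Sum>s\<in>V. (a s)\<^sup>2 * \<tau>\<^sup>2) + k\<^sup>2 * (\<Sum>s\<in>U. \<Sum>t\<in>U. real (Nnb2 Y N D s t) * \<sigma> s t)"
      by (simp add: centered_sq[OF prob sqi_X sqi_Zr EX EZ EXZ] EX2 EZ2)
    also have "(\<Sum>s\<in>V. (a s)\<^sup>2 * \<tau>\<^sup>2) = (\<Sum>s\<in>U - y. (a s)\<^sup>2 * \<tau>\<^sup>2) + (\<Sum>s\<in>y. (a s)\<^sup>2 * \<tau>\<^sup>2)"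
    proof -
      have eq: "V = (U - y) \<union> y" by (auto simp: V_def)
      have f: "finite (U - y)" "finite y" using finV by (auto simp: V_def)
      show ?thesis unfolding eq by (rule sum.union_disjoint[OF f]) auto
    qed
    also have "(\<Sum>s\<in>U - y. (a s)\<^sup>2 * \<tau>\<^sup>2) = (\<Sum>s\<in>\<Union>D - y. (\<phi>D (Mnb Y N D) * real (Nnb1 Y N D s) / real (Mnb Y N D))\<^sup>2 * \<tau>\<^sup>2)"
      by (intro sum.cong) (auto simp: U_def a_def k_def)
    also have "(\<Sum>s\<in>y. (a s)\<^sup>2 * \<tau>\<^sup>2) = (\<Sum>s\<in>y. (1 - \<phi>D (Mnb Y N D) * real (Nnb1 Y N D s) / real (Mnb Y N D))\<^sup>2 * \<tau>\<^sup>2)"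
      by (intro sum.cong refl) (auto simp: a_def k_def power2_eq_square algebra_simps)
    finally show ?thesis by (simp add: U_def k_def c_def algebra_simps)
  qed
  show ?thesis using part1 part2 by blast
qed

end
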